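(* If $x\in\mathrm{Sort}_n(123,321)$, then $x$ avoids the pattern $123$.
   Context: A permutation contains a pattern $p$ if it has a subsequence order-isomorphic to $p$; otherwise it avoids $p$. For a set $T$ of patterns, the map $s_T$ is defined as follows: the entries of the input permutation are read from left to right, with an initially empty stack. At each step, if the input is nonempty and pushing the next input entry onto the stack produces a stack whose contents, read from top to bottom, avoid every pattern in $T$, that entry is pushed; otherwise the top entry of the stack is popped and appended to the output. When the input is exhausted, the remaining stack entries are popped one at a time to the output. Write $s_{\sigma,\tau}=s_{\{\sigma,\tau\}}$ and $s=s_{\{21\}}$ (West's stack-sorting map). $\mathrm{Sort}_n(\sigma,\tau)$ is the set of $x\in S_n$ with $s(s_{\sigma,\tau}(x))=12\cdots n$. *)

theory Defs
  imports "HOL-Library.Sublist"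
begin

definition perms :: "nat \<Rightarrow> nat list set" where
  "perms n = {x. distinct x \<and> set x = {1..n}}"

definition order_iso :: "nat list \<Rightarrow> nat list \<Rightarrow> bool" where
  "order_iso ys p \<longleftrightarrow> length ys = length p \<and>
     (\<forall>i<length p. \<forall>j<length p. (ys ! i < ys ! j) \<longleftrightarrow> (p ! i < p ! j))"

definition contains :: "nat list \<Rightarrow> nat list \<Rightarrow> bool" where
  "contains x p \<longleftrightarrow> (\<exists>ys. subseq ys x \<and> order_iso ys p)"

definition avoids :: "nat list \<Rightarrow> nat list \<Rightarrow> bool" where
  "avoids x p \<longleftrightarrow> \<not> contains x p"

definition avoids_all :: "nat list set \<Rightarrow> nat list \<Rightarrow> bool" where
  "avoids_all T st \<longleftrightarrow> (\<forall>p\<in>T. avoids st p)"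

text \<open>Arguments: set of patterns, remaining input,
  current stack (head = top, so the list reads the stack from top to bottom). Pushing onto the empty stack is always performed
  (for patterns of length at least 2 a one-entry stack avoids them anyway).\<close>
fun stack_run :: "nat list set \<Rightarrow> nat list \<Rightarrow> nat list \<Rightarrow> nat list" where
  "stack_run T [] st = st"
| "stack_run T (a # xs) [] = stack_run T xs [a]"
| "stack_run T (a # xs) (b # st) =
     (if avoids_all T (a # b # st) then stack_run T xs (a # b # st)
      else b # stack_run T (a # xs) st)"

definition sT :: "nat list set \<Rightarrow> nat list \<Rightarrow> nat list" where
  "sT T x = stack_run T x []"

definition s2 :: "nat list \<Rightarrow> nat list \<Rightarrow> nat list \<Rightarrow> nat list" where
  "s2 \<sigma> \<tau> = sT {\<sigma>, \<tau>}"

definition west_s :: "nat list \<Rightarrow> nat list" where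
  "west_s = sT {[2,1]}"

definition Sort :: "nat \<Rightarrow> nat list \<Rightarrow> nat list \<Rightarrow> nat list set" where
  "Sort n \<sigma> \<tau> = {x \<in> perms n. west_s (s2 \<sigma> \<tau> x) = [1..<n+1]}"

end

theory Submission
  imports Defs
begin

definition inc3 :: "nat list \<Rightarrow> bool" where
  "inc3 w \<longleftrightarrow> (\<exists>p q r. subseq [p,q,r] w \<and> p < q \<and> q < r)"
definition dec3 :: "nat list \<Rightarrow> bool" where
  "dec3 w \<longleftrightarrow> (\<exists>p q r. subseq [p,q,r] w \<and> p > q \<and> q > r)"
definition p231 :: "nat list \<Rightarrow> bool" where
  "p231 w \<longleftrightarrow> (\<exists>p q r. subseq [p,q,r] w \<and> r < p \<and> p < q)"
definition Hv :: "nat \<Rightarrow> nat list \<Rightarrow> bool" where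
  "Hv v w \<longleftrightarrow> (\<exists>q r. subseq [q,r] w \<and> r < v \<and> v < q)"

lemma less3: "(i::nat) < 3 \<longleftrightarrow> i = 0 \<or> i = 1 \<or> i = 2" by auto
lemma less2: "(i::nat) < 2 \<longleftrightarrow> i = 0 \<or> i = 1" by auto

lemma len3: "length ys = 3 \<Longrightarrow> \<exists>a b c. ys = [a,b,c]"
  by (auto simp: numeral_3_eq_3 length_Suc_conv)

lemma oi123: "order_iso ys [1,2,3] \<longleftrightarrow> (\<exists>a b c. ys = [a,b,c] \<and> a < b \<and> b < c)"
proof
  assume h: "order_iso ys [1,2,3]"
  then have "length ys = 3" by (simp add: order_iso_def)
  then obtain a b c where ys: "ys = [a,b,c]" using len3 by blast
  from h have "\<forall>i<3. \<forall>j<3. (ys ! i < ys ! j) \<longleftrightarrow> ([1,2,3::nat] ! i < [1,2,3] ! j)"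
    by (simp add: order_iso_def)
  then show "\<exists>a b c. ys = [a,b,c] \<and> a < b \<and> b < c" unfolding ys less3 by auto
next
  assume "\<exists>a b c. ys = [a,b,c] \<and> a < b \<and> b < c"
  then show "order_iso ys [1,2,3]" unfolding order_iso_def by (auto simp: less_Suc_eq)
qed

lemma oi321: "order_iso ys [3,2,1] \<longleftrightarrow> (\<exists>a b c. ys = [a,b,c] \<and> a > b \<and> b > c)"
proof
  assume h: "order_iso ys [3,2,1]"
  then have "length ys = 3" by (simp add: order_iso_def)
  then obtain a b c where ys: "ys = [a,b,c]" using len3 by blast
  from h have "\<forall>i<3. \<forall>j<3. (ys ! i < ys ! j) \<longleftrightarrow> ([3,2,1::nat] ! i < [3,2,1] ! j)"
    by (simp add: order_iso_def)
  then show "\<exists>a b c. ys = [a,b,c] \<and> a > b \<and> b > c" unfolding ys less3 by auto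
next
  assume "\<exists>a b c. ys = [a,b,c] \<and> a > b \<and> b > c"
  then show "order_iso ys [3,2,1]" unfolding order_iso_def by (auto simp: less_Suc_eq)
qed

lemma oi231: "order_iso ys [2,3,1] \<longleftrightarrow> (\<exists>a b c. ys = [a,b,c] \<and> c < a \<and> a < b)"
proof
  assume h: "order_iso ys [2,3,1]"
  then have "length ys = 3" by (simp add: order_iso_def)
  then obtain a b c where ys: "ys = [a,b,c]" using len3 by blast
  from h have "\<forall>i<3. \<forall>j<3. (ys ! i < ys ! j) \<longleftrightarrow> ([2,3,1::nat] ! i < [2,3,1] ! j)"
    by (simp add: order_iso_def)
  then show "\<exists>a b c. ys = [a,b,c] \<and> c < a \<and> a < b" unfolding ys less3 by auto
next
  assume "\<exists>a b c. ys = [a,b,c] \<and> c < a \<and> a < b"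
  then show "order_iso ys [2,3,1]" unfolding order_iso_def by (auto simp: less_Suc_eq)
qed

lemma oi21: "a > b \<Longrightarrow> order_iso [a,b] [2,1]"
  unfolding order_iso_def by (auto simp: less_Suc_eq)

lemma contains123: "contains w [1,2,3] \<longleftrightarrow> inc3 w"
  unfolding contains_def inc3_def oi123 by blast
lemma contains321: "contains w [3,2,1] \<longleftrightarrow> dec3 w"
  unfolding contains_def dec3_def oi321 by blast
lemma contains231: "contains w [2,3,1] \<longleftrightarrow> p231 w"
  unfolding contains_def p231_def oi231 by blast

abbreviation T0 :: "nat list set" where "T0 \<equiv> {[1,2,3],[3,2,1]}"

lemma avT0: "avoids_all T0 w \<longleftrightarrow> \<not> inc3 w \<and> \<not> dec3 w"
  unfolding avoids_all_def avoids_def using contains123[of w] contains321[of w] by simp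

lemma subseq_rev: "subseq xs ys \<Longrightarrow> subseq (rev xs) (rev ys)"
  by (induction rule: list_emb.induct) (auto intro: subseq_rev_drop_many)

lemma inc3_rev: "inc3 (rev w) \<longleftrightarrow> dec3 w"
proof
  assume "inc3 (rev w)"
  then obtain p q r where "subseq [p,q,r] (rev w)" "p<q" "q<r" unfolding inc3_def by blast
  then have "subseq [r,q,p] w" using subseq_rev by fastforce
  then show "dec3 w" unfolding dec3_def using \<open>p<q\<close> \<open>q<r\<close> by blast
next
  assume "dec3 w"
  then obtain p q r where "subseq [p,q,r] w" "p>q" "q>r" unfolding dec3_def by blast
  then have "subseq [r,q,p] (rev w)" using subseq_rev by fastforce
  then show "inc3 (rev w)" unfolding inc3_def using \<open>p>q\<close> \<open>q>r\<close> by blast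
qed

lemma short_inc3: "length w < 3 \<Longrightarrow> \<not> inc3 w"
  unfolding inc3_def using list_emb_length by fastforce
lemma short_dec3: "length w < 3 \<Longrightarrow> \<not> dec3 w"
  unfolding dec3_def using list_emb_length by fastforce

lemma set_run: "set (stack_run T xs st) = set xs \<union> set st"
  by (induction T xs st rule: stack_run.induct) auto

lemma subseq_run: "subseq st (stack_run T xs st)"
proof (induction T xs st rule: stack_run.induct)
  case (3 T a xs b st)
  then show ?case by (auto intro: subseq_Cons')
qed auto

lemma inc3_mono: assumes "inc3 w" "subseq w w'" shows "inc3 w'"
proof -
  obtain p q r where pq: "subseq [p,q,r] w" "p<q" "q<r" using assms(1) unfolding inc3_def by blast
  have "subseq [p,q,r] w'" using pq(1) assms(2) by (rule subseq_order.trans)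
  then show ?thesis using pq(2,3) unfolding inc3_def by blast
qed
lemma dec3_mono: assumes "dec3 w" "subseq w w'" shows "dec3 w'"
proof -
  obtain p q r where pq: "subseq [p,q,r] w" "p>q" "q>r" using assms(1) unfolding dec3_def by blast
  have "subseq [p,q,r] w'" using pq(1) assms(2) by (rule subseq_order.trans)
  then show ?thesis using pq(2,3) unfolding dec3_def by blast
qed

lemma avT0_tl: assumes "avoids_all T0 (b#st)" shows "avoids_all T0 st"
proof -
  have s: "subseq st (b#st)" by (rule subseq_Cons'[of b]) simp
  show ?thesis using assms inc3_mono[OF _ s] dec3_mono[OF _ s] unfolding avT0 by blast
qed

lemma avT0_single: "avoids_all T0 [a]"
  unfolding avT0 using short_inc3 short_dec3 by simp

lemma split3: "[p,q,r] = l1 @ l2 \<Longrightarrow> (l1 = [] \<and> l2 = [p,q,r]) \<or> (l1 = [p] \<and> l2 = [q,r]) \<or> (l1=[p,q] \<and> l2=[r]) \<or> (l1=[p,q,r] \<and> l2=[])"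
  by (auto simp: Cons_eq_append_conv append_eq_Cons_conv)

lemma BL:
  assumes av: "avoids_all T0 (b#st)" and nav: "\<not> avoids_all T0 (a#b#st)"
    and w: "\<not> inc3 (rev st @ a # xs)"
  shows "\<exists>r'. r' < b \<and> (r' \<in> set st \<or> r' = a)"
proof -
  from av have i1: "\<not> inc3 (b#st)" and d1: "\<not> dec3 (b#st)" unfolding avT0 by auto
  from nav have "inc3 (a#b#st) \<or> dec3 (a#b#st)" unfolding avT0 by auto
  then show ?thesis
  proof
    assume "inc3 (a#b#st)"
    then obtain p q r where s: "subseq [p,q,r] (a#b#st)" "p<q" "q<r" unfolding inc3_def by blast
    have pa: "p = a"
    proof (rule ccontr)
      assume "p \<noteq> a"
      then have "subseq [p,q,r] (b#st)" using s(1) by simp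
      then show False using i1 s(2,3) unfolding inc3_def by blast
    qed
    then have sq: "subseq [q,r] (b#st)" using s(1) by simp
    have "q \<le> b"
    proof (rule ccontr)
      assume "\<not> q \<le> b"
      then have bq: "b < q" by simp
      then have "subseq [q,r] st" using sq by simp
      then have "subseq [b,q,r] (b#st)" by simp
      then show False using i1 s(3) bq unfolding inc3_def by blast
    qed
    then show ?thesis using pa s(2) by (intro exI[of _ a]) auto
  next
    assume "dec3 (a#b#st)"
    then obtain p q r where s: "subseq [p,q,r] (a#b#st)" "p>q" "q>r" unfolding dec3_def by blast
    have pa: "p = a"
    proof (rule ccontr)
      assume "p \<noteq> a"
      then have "subseq [p,q,r] (b#st)" using s(1) by simp
      then show False using d1 s(2,3) unfolding dec3_def by blast
    qed
    then have sq: "subseq [q,r] (b#st)" using s(1) by simp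
    show ?thesis
    proof (cases "q = b")
      case True
      then have "r \<in> set st" using sq by (simp add: subseq_singleton_left)
      then show ?thesis using True s(3) by auto
    next
      case False
      then have "subseq [q,r] st" using sq by simp
      then have "subseq [r,q] (rev st)" using subseq_rev by force
      then have "subseq ([r,q] @ [a]) (rev st @ [a])" by (rule list_emb_append_mono) simp
      then have "subseq [r,q,a] (rev st @ a # xs)"
        using subseq_rev_drop_many[of "[r,q,a]" "rev st @ [a]" xs] by simp
      then show ?thesis using w s(2,3) pa unfolding inc3_def by blast
    qed
  qed
qed

lemma subseq_in2: "subseq [r,q] xs \<Longrightarrow> q \<in> set xs"
  using subseq_Cons'[of r "[q]" xs] by (simp add: subseq_singleton_left)

lemma subseq_in1: "subseq (r#l) xs \<Longrightarrow> r \<in> set xs"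
  by (induction xs) (auto split: if_splits)

lemma subseq_ConsR: "subseq xs ys \<Longrightarrow> subseq xs (y#ys)"
  using subseq_drop_many[of xs ys "[y]"] by simp

lemma subseq_set: "subseq xs ys \<Longrightarrow> set xs \<subseteq> set ys"
  by (induction rule: list_emb.induct) auto

lemma Hv_Cons: "Hv v y \<Longrightarrow> Hv v (b#y)"
  unfolding Hv_def using subseq_ConsR by blast

lemma Lp:
  "T = T0 \<Longrightarrow> avoids_all T0 st \<Longrightarrow> \<not> inc3 (rev st @ xs) \<Longrightarrow> r < v \<Longrightarrow> v < q \<Longrightarrow> q \<in> set xs
   \<Longrightarrow> (r \<in> set st \<or> subseq [r,q] xs) \<Longrightarrow> Hv v (stack_run T xs st)"
proof (induction T xs st arbitrary: r q rule: stack_run.induct)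
  case (1 T st)
  then show ?case by simp
next
  case (2 T a xs)
  have w: "r \<in> set [a] \<or> subseq [r,q] xs" and qx: "q \<in> set xs"
    using 2(8) by (auto split: if_splits dest: subseq_in2 simp: subseq_singleton_left)
  show ?case using 2(1)[OF 2(2) avT0_single _ 2(5,6) qx w] 2(4) by simp
next
  case (3 T a xs b st)
  show ?case
  proof (cases "avoids_all T (a # b # st)")
    case True
    then have run: "stack_run T (a # xs) (b # st) = stack_run T xs (a # b # st)" by simp
    show ?thesis
    proof (cases "q \<in> set xs")
      case qx: True
      have w: "r \<in> set (a#b#st) \<or> subseq [r,q] xs"
        using 3(9) by (auto split: if_splits)
      show ?thesis unfolding run
        using 3(1)[OF True 3(3) _ _ 3(6,7) qx w] True 3(3,5) by simp
    next
      case qx: False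
      then have qa: "q = a" using 3(8) by simp
      have "r \<in> set (b#st)"
        using 3(9) qx qa by (auto split: if_splits dest: subseq_in2 simp: subseq_singleton_left)
      then have "subseq [a, r] (a#b#st)" by (auto simp: subseq_singleton_left)
      then have "subseq [a, r] (stack_run T xs (a#b#st))"
        by (rule subseq_order.trans[OF _ subseq_run])
      then show ?thesis unfolding run Hv_def using qa 3(6,7) by blast
    qed
  next
    case False
    then have run: "stack_run T (a # xs) (b # st) = b # stack_run T (a # xs) st" by simp
    have avs: "avoids_all T0 st" using 3(4) avT0_tl by blast
    have w': "\<not> inc3 (rev st @ a # xs)"
    proof
      assume "inc3 (rev st @ a # xs)"
      moreover have "subseq (rev st @ a # xs) (rev st @ (b # a # xs))"
        by (rule list_emb_append_mono) (auto intro: subseq_ConsR)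
      ultimately show False using 3(5) inc3_mono by simp
    qed
    show ?thesis
    proof (cases "r \<in> set st \<or> subseq [r,q] (a#xs)")
      case True
      show ?thesis unfolding run
        by (rule Hv_Cons, rule 3(2)[OF False 3(3) avs w' 3(6,7,8) True])
    next
      case nr: False
      then have rb: "r = b" using 3(9) by auto
      obtain r' where r': "r' < b" "r' \<in> set st \<or> r' = a"
        using BL[OF 3(4) _ w'] False 3(3) by auto
      have w2: "r' \<in> set st \<or> subseq [r',q] (a#xs)"
      proof (cases "r' \<in> set st")
        case False
        then have "r' = a" using r' by auto
        moreover have "q \<noteq> a" using r' rb 3(6,7) \<open>r' = a\<close> by auto
        ultimately show ?thesis using 3(8) by (simp add: subseq_singleton_left)
      qed simp
      show ?thesis unfolding run
        by (rule Hv_Cons, rule 3(2)[OF False 3(3) avs w' _ 3(7,8) w2]) (use r' rb 3(6) in simp)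
    qed
  qed
qed

lemma Hv_p231: "Hv b y \<Longrightarrow> p231 (b#y)"
  unfolding Hv_def p231_def by (metis subseq_Cons2)

lemma p231_Cons: "p231 y \<Longrightarrow> p231 (b#y)"
  unfolding p231_def using subseq_ConsR by blast

lemma M:
  "T = T0 \<Longrightarrow> avoids_all T0 st \<Longrightarrow> inc3 (rev st @ xs) \<Longrightarrow> p231 (stack_run T xs st)"
proof (induction T xs st rule: stack_run.induct)
  case (1 T st)
  then show ?case using inc3_rev avT0 by simp
next
  case (2 T a xs)
  then show ?case using avT0_single by simp
next
  case (3 T a xs b st)
  show ?case
  proof (cases "avoids_all T (a # b # st)")
    case True
    then show ?thesis using 3(1)[OF True 3(3)] 3(3,5) by simp
  next
    case False
    then have run: "stack_run T (a # xs) (b # st) = b # stack_run T (a # xs) st" by simp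
    have avs: "avoids_all T0 st" using 3(4) avT0_tl by blast
    show ?thesis
    proof (cases "inc3 (rev st @ a # xs)")
      case True
      then show ?thesis unfolding run using 3(2)[OF False 3(3) avs] p231_Cons by blast
    next
      case w': False
      from 3(4) have i1: "\<not> inc3 (rev (b#st))" using avT0 inc3_rev by blast
      have i0: "\<not> inc3 (rev st)" using avs avT0 inc3_rev by blast
      from 3(5) obtain p q r where s: "subseq [p,q,r] (rev st @ (b # a # xs))" "p<q" "q<r"
        unfolding inc3_def by auto
      from s(1) obtain l1 l2 where l: "[p,q,r] = l1 @ l2" "subseq l1 (rev st)" "subseq l2 (b # a # xs)"
        by (rule subseq_appendE)
      have W'sub: "subseq (l1 @ l2) (rev st @ a # xs)" if "subseq l1 (rev st)" "subseq l2 (a # xs)" for l1 l2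
        using that by (rule list_emb_append_mono)
      have W'no: False if "subseq [p,q,r] (rev st @ a # xs)"
      proof -
        have "inc3 (rev st @ a # xs)" unfolding inc3_def
          using that s(2,3) by blast
        then show False using w' by simp
      qed
      let ?y = "stack_run T (a # xs) st"
      have R: "Hv b ?y" if "r' < b" "b < q'" "q' \<in> set (a#xs)" "r' \<in> set st \<or> subseq [r',q'] (a#xs)" for r' q'
        using 3(3) avs w' that by (rule Lp)
      from split3[OF l(1)] show ?thesis
      proof (elim disjE conjE)
        assume "l1 = []" "l2 = [p,q,r]"
        then have sb: "subseq [p,q,r] (b # a # xs)" using l by simp
        have pb: "p = b"
        proof (rule ccontr)
          assume "p \<noteq> b"
          then have "subseq [p,q,r] (a # xs)" using sb by simp
          then have "subseq ([] @ [p,q,r]) (rev st @ a # xs)" using W'sub[of "[]"] by simp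
          then show False using W'no by simp
        qed
        then have sqr: "subseq [q,r] (a#xs)" using sb by simp
        obtain r' where r': "r' < b" "r' \<in> set st \<or> r' = a"
          using BL[OF 3(4) _ w'] False 3(3) by auto
        have qin: "q \<in> set (a#xs)" using sqr by (rule subseq_in1)
        have w2: "r' \<in> set st \<or> subseq [r',q] (a#xs)"
        proof (cases "r' \<in> set st")
          case False
          then have "r' = a" using r' by auto
          moreover have "q \<noteq> a" using r' pb s(2) \<open>r' = a\<close> by auto
          ultimately show ?thesis using qin by (simp add: subseq_singleton_left)
        qed simp
        have "b < q" using pb s(2) by simp
        then have "Hv b ?y" using R[OF r'(1) _ qin w2] by simp
        then show ?thesis unfolding run by (rule Hv_p231)
      next
        assume "l1 = [p]" "l2 = [q,r]"
        then have sp: "subseq [p] (rev st)" and sq: "subseq [q,r] (b # a # xs)" using l by auto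
        show ?thesis
        proof (cases "q = b")
          case True
          then have rin: "r \<in> set (a#xs)" using sq by (auto simp: subseq_singleton_left split: if_splits)
          have pin: "p \<in> set st" using sp by (simp add: subseq_singleton_left)
          have "p < b" "b < r" using True s(2,3) by simp_all
          then have "Hv b ?y" using R[OF _ _ rin] pin by simp
          then show ?thesis unfolding run by (rule Hv_p231)
        next
          case False
          then have "subseq [q,r] (a#xs)" using sq by simp
          then have "subseq ([p] @ [q,r]) (rev st @ a # xs)" using W'sub[OF sp] by blast
          then show ?thesis using W'no by simp
        qed
      next
        assume "l1 = [p,q]" "l2 = [r]"
        then have sp: "subseq [p,q] (rev st)" and sq: "subseq [r] (b # a # xs)" using l by auto
        show ?thesis
        proof (cases "r = b")
          case True
          have "subseq ([p,q] @ [b]) (rev st @ [b])" using sp by (rule list_emb_append_mono) simp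
          then have "inc3 (rev (b#st))" unfolding inc3_def using True s(2,3) by auto
          then show ?thesis using i1 by simp
        next
          case False
          then have "subseq [r] (a#xs)" using sq by simp
          then have "subseq ([p,q] @ [r]) (rev st @ a # xs)" using W'sub[OF sp] by blast
          then show ?thesis using W'no by simp
        qed
      next
        assume "l1 = [p,q,r]"
        then have "inc3 (rev st)" using l(2) s(2,3) unfolding inc3_def by blast
        then show ?thesis using i0 by simp
      qed
    qed
  qed
qed

lemma West:
  "T = {[2,1]} \<Longrightarrow> r < p \<Longrightarrow> p < q \<Longrightarrow> (p \<in> set st \<and> subseq [q,r] xs) \<or> subseq [p,q,r] xs
   \<Longrightarrow> \<exists>u w. subseq [u,w] (stack_run T xs st) \<and> w < u"
proof (induction T xs st arbitrary: p q r rule: stack_run.induct)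
  case (1 T st)
  then show ?case by simp
next
  case (2 T a xs)
  have "(p \<in> set [a] \<and> subseq [q,r] xs) \<or> subseq [p,q,r] xs"
    using 2(5) by (auto split: if_splits)
  then show ?case using 2(1)[OF 2(2,3,4)] by simp
next
  case (3 T a xs b st)
  show ?case
  proof (cases "avoids_all T (a # b # st)")
    case True
    then have run: "stack_run T (a # xs) (b # st) = stack_run T xs (a # b # st)" by simp
    have "(p \<in> set (a#b#st) \<and> subseq [q,r] xs) \<or> subseq [p,q,r] xs"
    proof (cases "subseq [p,q,r] (a#xs)")
      case True
      then show ?thesis by (auto split: if_splits)
    next
      case False
      then have ps: "p \<in> set (b#st)" and sq: "subseq [q,r] (a#xs)" using 3(6) by auto
      show ?thesis
      proof (cases "q = a")
        case True
        have "subseq [a,p] (a#b#st)" using ps by (auto simp: subseq_singleton_left)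
        moreover have "order_iso [a,p] [2,1]" using oi21 True 3(5) by simp
        ultimately have "contains (a#b#st) [2,1]" unfolding contains_def by blast
        then show ?thesis using \<open>avoids_all T (a # b # st)\<close> 3(3) unfolding avoids_all_def avoids_def by simp
      next
        case False
        then show ?thesis using ps sq by simp
      qed
    qed
    then show ?thesis unfolding run using 3(1)[OF True 3(3,4,5)] by blast
  next
    case False
    then have run: "stack_run T (a # xs) (b # st) = b # stack_run T (a # xs) st" by simp
    show ?thesis
    proof (cases "p = b \<and> \<not> subseq [p,q,r] (a#xs)")
      case True
      then have "subseq [q,r] (a#xs)" using 3(6) by auto
      then have "r \<in> set (a#xs)" by (rule subseq_in2)
      then have "r \<in> set (stack_run T (a # xs) st)" by (auto simp: set_run)
      then have "subseq [b,r] (b # stack_run T (a # xs) st)" by (auto simp: subseq_singleton_left)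
      then show ?thesis unfolding run using True 3(4) by blast
    next
      case nb: False
      have "(p \<in> set st \<and> subseq [q,r] (a#xs)) \<or> subseq [p,q,r] (a#xs)"
        using 3(6) nb by auto
      then obtain u w where "subseq [u,w] (stack_run T (a # xs) st)" "w < u"
        using 3(2)[OF False 3(3,4,5)] by blast
      then show ?thesis unfolding run using subseq_ConsR by blast
    qed
  qed
qed

lemma sorted_subseq: "subseq xs ys \<Longrightarrow> sorted_wrt (<) ys \<Longrightarrow> sorted_wrt (<) (xs::nat list)"
  by (induction rule: list_emb.induct) (auto dest: subseq_set)

theorem proposition4p1:
  fixes n :: nat and x :: "nat list"
  assumes "x \<in> Sort n [1,2,3] [3,2,1]"
  shows "avoids x [1,2,3]"
proof (rule ccontr)
  assume "\<not> avoids x [1,2,3]"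
  then have "inc3 (rev [] @ x)" unfolding avoids_def contains123 by simp
  moreover have av0: "avoids_all T0 []" unfolding avT0 using short_inc3 short_dec3 by simp
  ultimately have "p231 (stack_run T0 x [])" using M[OF refl av0] by blast
  then obtain p q r where s: "subseq [p,q,r] (s2 [1,2,3] [3,2,1] x)" "r < p" "p < q"
    unfolding p231_def s2_def sT_def by blast
  from West[of "{[2,1]}" r p q "[]" "s2 [1,2,3] [3,2,1] x", OF refl s(2,3)] s(1)
  obtain u w where uw: "subseq [u,w] (west_s (s2 [1,2,3] [3,2,1] x))" "w < u"
    unfolding west_s_def sT_def by blast
  have "west_s (s2 [1,2,3] [3,2,1] x) = [1..<n+1]" using assms unfolding Sort_def by simp
  then have sub: "subseq [u,w] [1..<n+1]" using uw(1) by simp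
  have srt: "sorted_wrt (<) [1..<n+1]" by (rule sorted_wrt_upt)
  have "sorted_wrt (<) [u,w]" by (rule sorted_subseq[OF sub srt])
  then show False using uw(2) by simp
qed

end
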